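(* Consider an $s$-stage Runge--Kutta method with coefficients $a_{ij}$, $b_i$ ($i,j=1,\dots,s$). If \[ a_{ij}a_{ik} - a_{ij}a_{jk} - a_{ik}a_{kj} = 0\qquad\text{for all } i,j,k\text{ with } j\neq k, \tag{P} \] then, up to a permutation of the stages (i.e. there is a permutation $\sigma$ of $\{1,\dots,s\}$ such that the coefficients $a_{\sigma(i)\sigma(j)}, b_{\sigma(i)}$ define the method), the method is an explicit Runge--Kutta method or a DIRK method. Consequently, a Runge--Kutta method with all $b_i\neq0$ is quadratic projectable if and only if, up to a permutation of its stages, it is a SyDIRK method.
   Context: A Runge--Kutta method with coefficients $a_{ij},b_i$ with $a_{ij}=0$ whenever $j>i$ is called explicit if $a_{ii}=0$ for all $i$, and diagonally implicit (DIRK) otherwise. A Runge--Kutta method is quadratic projectable if it satisfies both $b_ib_j - b_ia_{ij} - b_ja_{ji}=0$ for all $i,j=1,\dots,s$, and condition (P). A symplectic diagonally implicit Runge--Kutta (SyDIRK) method is one whose coefficients are $a_{ij}=b_j$ for $j<i$, $a_{ii}=b_i/2$, $a_{ij}=0$ for $j>i$, for given nonzero $b_1,\dots,b_s$. *)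

theory Defs
  imports Complex_Main "HOL-Combinatorics.Permutations"
begin

definition rk_lower_triangular :: "nat \<Rightarrow> (nat \<Rightarrow> nat \<Rightarrow> real) \<Rightarrow> bool" where
  "rk_lower_triangular s A \<longleftrightarrow> (\<forall>i\<in>{1..s}. \<forall>j\<in>{1..s}. i < j \<longrightarrow> A i j = 0)"

definition explicit_RK :: "nat \<Rightarrow> (nat \<Rightarrow> nat \<Rightarrow> real) \<Rightarrow> bool" where
  "explicit_RK s A \<longleftrightarrow> rk_lower_triangular s A \<and> (\<forall>i\<in>{1..s}. A i i = 0)"

definition DIRK :: "nat \<Rightarrow> (nat \<Rightarrow> nat \<Rightarrow> real) \<Rightarrow> bool" where
  "DIRK s A \<longleftrightarrow> rk_lower_triangular s A \<and> \<not> (\<forall>i\<in>{1..s}. A i i = 0)"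

definition condition_P :: "nat \<Rightarrow> (nat \<Rightarrow> nat \<Rightarrow> real) \<Rightarrow> bool" where
  "condition_P s A \<longleftrightarrow>
     (\<forall>i\<in>{1..s}. \<forall>j\<in>{1..s}. \<forall>k\<in>{1..s}. j \<noteq> k \<longrightarrow>
        A i j * A i k - A i j * A j k - A i k * A k j = 0)"

definition quadratic_projectable :: "nat \<Rightarrow> (nat \<Rightarrow> nat \<Rightarrow> real) \<Rightarrow> (nat \<Rightarrow> real) \<Rightarrow> bool" where
  "quadratic_projectable s A b \<longleftrightarrow>
     (\<forall>i\<in>{1..s}. \<forall>j\<in>{1..s}. b i * b j - b i * A i j - b j * A j i = 0) \<and> condition_P s A"

definition SyDIRK :: "nat \<Rightarrow> (nat \<Rightarrow> nat \<Rightarrow> real) \<Rightarrow> (nat \<Rightarrow> real) \<Rightarrow> bool" where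
  "SyDIRK s A b \<longleftrightarrow> (\<forall>i\<in>{1..s}. b i \<noteq> 0) \<and>
     (\<forall>i\<in>{1..s}. \<forall>j\<in>{1..s}.
        A i j = (if j < i then b j else if j = i then b i / 2 else 0))"

end

theory Submission
  imports Defs
begin

lemma topo:
  assumes P: "condition_P s A"
  shows "\<exists>\<sigma>. \<sigma> permutes {1..s} \<and> rk_lower_triangular s (\<lambda>i j. A (\<sigma> i) (\<sigma> j))"
proof -
  define S where "S = {1..s}"
  define R where "R = (\<lambda>x y. x \<noteq> y \<and> A x y \<noteq> 0)"
  have Pi: "A i j * A i k - A i j * A j k - A i k * A k j = 0"
    if "i \<in> S" "j \<in> S" "k \<in> S" "j \<noteq> k" for i j k
    using P that unfolding condition_P_def S_def by blast
  have asym: "\<not> R y x" if "x \<in> S" "y \<in> S" "R x y" for x y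
  proof -
    have xy: "x \<noteq> y" and a: "A x y \<noteq> 0" using that(3) unfolding R_def by auto
    have "A x x * A x y - A x x * A x y - A x y * A y x = 0"
      using Pi[OF that(1) that(1) that(2) xy] .
    then have "A x y * A y x = 0" by simp
    then have "A y x = 0" using a by simp
    then show ?thesis unfolding R_def by simp
  qed
  have tr: "R x z" if "x \<in> S" "y \<in> S" "z \<in> S" "R x y" "R y z" for x y z
  proof -
    have xz: "x \<noteq> z" using asym that by blast
    have yz: "y \<noteq> z" and a1: "A x y \<noteq> 0" and a2: "A y z \<noteq> 0"
      using that(4,5) unfolding R_def by auto
    have "A x y * A x z - A x y * A y z - A x z * A z y = 0"
      using Pi[OF that(1,2,3) yz] .
    then have "A x z \<noteq> 0" using a1 a2 by auto
    then show ?thesis using xz unfolding R_def by simp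
  qed
  define h where "h = (\<lambda>x. card {y\<in>S. R x y})"
  have hlt: "h y < h x" if "x \<in> S" "y \<in> S" "R x y" for x y
  proof -
    have sub: "{z\<in>S. R y z} \<subseteq> {z\<in>S. R x z}"
      using tr[OF that(1,2)] that(3) by blast
    have "y \<in> {z\<in>S. R x z}" using that by blast
    moreover have "y \<notin> {z\<in>S. R y z}" unfolding R_def by simp
    ultimately have "{z\<in>S. R y z} \<subset> {z\<in>S. R x z}" using sub by blast
    moreover have "finite {z\<in>S. R x z}" unfolding S_def by simp
    ultimately show ?thesis unfolding h_def by (simp add: psubset_card_mono)
  qed
  define xs where "xs = sort_key h [1..<Suc s]"
  have setxs: "set xs = S" unfolding xs_def S_def by auto
  have dxs: "distinct xs" unfolding xs_def by simp
  have lxs: "length xs = s" unfolding xs_def by simp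
  have sxs: "sorted (map h xs)" unfolding xs_def by simp
  define \<sigma> where "\<sigma> = (\<lambda>i. if i \<in> S then xs ! (i - 1) else i)"
  have b1: "bij_betw ((!) xs) {..<s} S" using bij_betw_nth[OF dxs] lxs setxs by auto
  have b2: "bij_betw (\<lambda>i. i - 1) S {..<s}"
    unfolding S_def by (rule bij_betwI[where g="\<lambda>i. i + 1"]) auto
  have "bij_betw ((!) xs \<circ> (\<lambda>i. i - 1)) S S" using bij_betw_trans[OF b2 b1] .
  then have "bij_betw \<sigma> S S"
    by (rule bij_betw_cong[THEN iffD1, rotated]) (auto simp: \<sigma>_def)
  then have perm: "\<sigma> permutes S"
    by (rule bij_imp_permutes) (auto simp: \<sigma>_def)
  have "A (\<sigma> i) (\<sigma> j) = 0" if "i \<in> S" "j \<in> S" "i < j" for i j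
  proof (rule ccontr)
    assume nz: "A (\<sigma> i) (\<sigma> j) \<noteq> 0"
    have si: "\<sigma> i = xs ! (i - 1)" and sj: "\<sigma> j = xs ! (j - 1)" using that by (auto simp: \<sigma>_def)
    have il: "i - 1 < s" "j - 1 < s" using that by (auto simp: S_def)
    have "i - 1 \<noteq> j - 1" using that by (auto simp: S_def)
    then have ne: "\<sigma> i \<noteq> \<sigma> j" using si sj dxs il lxs by (simp add: nth_eq_iff_index_eq)
    have inS: "\<sigma> i \<in> S" "\<sigma> j \<in> S" using si sj il lxs setxs nth_mem by auto
    have "h (\<sigma> j) < h (\<sigma> i)" using hlt[OF inS] nz ne by (auto simp: R_def)
    moreover have "h (xs ! (i - 1)) \<le> h (xs ! (j - 1))"
      using sorted_nth_mono[OF sxs, of "i - 1" "j - 1"] il lxs that by auto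
    ultimately show False using si sj by simp
  qed
  then show ?thesis using perm unfolding rk_lower_triangular_def S_def by auto
qed

theorem theorem2p7:
  fixes s :: nat and A :: "nat \<Rightarrow> nat \<Rightarrow> real" and b :: "nat \<Rightarrow> real"
  shows "(condition_P s A \<longrightarrow>
            (\<exists>\<sigma>. \<sigma> permutes {1..s} \<and>
                 (explicit_RK s (\<lambda>i j. A (\<sigma> i) (\<sigma> j)) \<or> DIRK s (\<lambda>i j. A (\<sigma> i) (\<sigma> j)))))
       \<and> ((\<forall>i\<in>{1..s}. b i \<noteq> 0) \<longrightarrow>
            (quadratic_projectable s A b \<longleftrightarrow>
              (\<exists>\<sigma>. \<sigma> permutes {1..s} \<and>
                 SyDIRK s (\<lambda>i j. A (\<sigma> i) (\<sigma> j)) (\<lambda>i. b (\<sigma> i)))))"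
proof (intro conjI impI)
  assume "condition_P s A"
  then show "\<exists>\<sigma>. \<sigma> permutes {1..s} \<and>
                 (explicit_RK s (\<lambda>i j. A (\<sigma> i) (\<sigma> j)) \<or> DIRK s (\<lambda>i j. A (\<sigma> i) (\<sigma> j)))"
    using topo unfolding explicit_RK_def DIRK_def by blast
next
  assume bnz: "\<forall>i\<in>{1..s}. b i \<noteq> 0"
  show "quadratic_projectable s A b \<longleftrightarrow>
              (\<exists>\<sigma>. \<sigma> permutes {1..s} \<and>
                 SyDIRK s (\<lambda>i j. A (\<sigma> i) (\<sigma> j)) (\<lambda>i. b (\<sigma> i)))"
  proof
    assume qp: "quadratic_projectable s A b"
    then obtain \<sigma> where perm: "\<sigma> permutes {1..s}"
      and lt: "rk_lower_triangular s (\<lambda>i j. A (\<sigma> i) (\<sigma> j))"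
      using topo unfolding quadratic_projectable_def by blast
    have sy: "b (\<sigma> i) * b (\<sigma> j) - b (\<sigma> i) * A (\<sigma> i) (\<sigma> j) - b (\<sigma> j) * A (\<sigma> j) (\<sigma> i) = 0"
      if "i \<in> {1..s}" "j \<in> {1..s}" for i j
      using qp permutes_in_image[OF perm] that unfolding quadratic_projectable_def by blast
    have bs: "b (\<sigma> i) \<noteq> 0" if "i \<in> {1..s}" for i
      using bnz permutes_in_image[OF perm] that by blast
    have "A (\<sigma> i) (\<sigma> j) = (if j < i then b (\<sigma> j) else if j = i then b (\<sigma> i) / 2 else 0)"
      if i: "i \<in> {1..s}" and j: "j \<in> {1..s}" for i j
    proof -
      consider "j < i" | "j = i" | "i < j" by linarith
      then show ?thesis
      proof cases
        case 1
        have "A (\<sigma> j) (\<sigma> i) = 0" using lt 1 i j unfolding rk_lower_triangular_def by blast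
        then have "b (\<sigma> i) * (b (\<sigma> j) - A (\<sigma> i) (\<sigma> j)) = 0" using sy[OF i j]
          by (simp add: algebra_simps)
        then show ?thesis using 1 bs[OF i] by simp
      next
        case 2
        have "b (\<sigma> i) * (b (\<sigma> i) - 2 * A (\<sigma> i) (\<sigma> i)) = 0" using sy[OF i i]
          by (simp add: algebra_simps)
        then show ?thesis using 2 bs[OF i] by simp
      next
        case 3
        then show ?thesis using lt i j unfolding rk_lower_triangular_def by auto
      qed
    qed
    then show "\<exists>\<sigma>. \<sigma> permutes {1..s} \<and> SyDIRK s (\<lambda>i j. A (\<sigma> i) (\<sigma> j)) (\<lambda>i. b (\<sigma> i))"
      using perm bs unfolding SyDIRK_def by blast
  next
    assume "\<exists>\<sigma>. \<sigma> permutes {1..s} \<and> SyDIRK s (\<lambda>i j. A (\<sigma> i) (\<sigma> j)) (\<lambda>i. b (\<sigma> i))"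
    then obtain \<sigma> where perm: "\<sigma> permutes {1..s}"
      and sd: "SyDIRK s (\<lambda>i j. A (\<sigma> i) (\<sigma> j)) (\<lambda>i. b (\<sigma> i))" by blast
    have Aeq: "A (\<sigma> i) (\<sigma> j) = (if j < i then b (\<sigma> j) else if j = i then b (\<sigma> i) / 2 else 0)"
      if "i \<in> {1..s}" "j \<in> {1..s}" for i j using sd that unfolding SyDIRK_def by blast
    have surj: "\<exists>i'\<in>{1..s}. i = \<sigma> i'" if "i \<in> {1..s}" for i
      using permutes_surj[OF perm] permutes_inv_o(2)[OF perm]
      by (metis permutes_inverses(1)[OF perm] permutes_in_image[OF permutes_inv[OF perm]] that)
    have c1: "b i * b j - b i * A i j - b j * A j i = 0" if hyp: "i \<in> {1..s}" "j \<in> {1..s}" for i j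
    proof -
      obtain i' j' where i': "i' \<in> {1..s}" "i = \<sigma> i'" and j': "j' \<in> {1..s}" "j = \<sigma> j'"
        using surj hyp by blast
      have "b (\<sigma> i') * b (\<sigma> j') - b (\<sigma> i') * A (\<sigma> i') (\<sigma> j') - b (\<sigma> j') * A (\<sigma> j') (\<sigma> i') = 0"
        unfolding Aeq[OF i'(1) j'(1)] Aeq[OF j'(1) i'(1)]
        by (cases "j' < i'"; cases "j' = i'") (auto simp: algebra_simps)
      then show ?thesis using i' j' by simp
    qed
    have c2: "A i j * A i k - A i j * A j k - A i k * A k j = 0"
      if hyp: "i \<in> {1..s}" "j \<in> {1..s}" "k \<in> {1..s}" "j \<noteq> k" for i j k
    proof -
      obtain i' j' k' where i': "i' \<in> {1..s}" "i = \<sigma> i'" and j': "j' \<in> {1..s}" "j = \<sigma> j'"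
        and k': "k' \<in> {1..s}" "k = \<sigma> k'"
        using surj hyp by meson
      have ne: "j' \<noteq> k'" using hyp j' k' by auto
      have "A (\<sigma> i') (\<sigma> j') * A (\<sigma> i') (\<sigma> k') - A (\<sigma> i') (\<sigma> j') * A (\<sigma> j') (\<sigma> k')
            - A (\<sigma> i') (\<sigma> k') * A (\<sigma> k') (\<sigma> j') = 0"
        unfolding Aeq[OF i'(1) j'(1)] Aeq[OF i'(1) k'(1)] Aeq[OF j'(1) k'(1)] Aeq[OF k'(1) j'(1)]
        using ne by (cases "j' < i'"; cases "k' < i'"; cases "j' < k'"; cases "j' = i'"; cases "k' = i'") auto
      then show ?thesis using i' j' k' by simp
    qed
    show "quadratic_projectable s A b"
      unfolding quadratic_projectable_def condition_P_def using c1 c2 by blast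
  qed
qed

end
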